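(* Let $s\in\{0,\tfrac12\}$, $\lambda\in\mathbb{C}$ and $\sigma\in\mathrm{Aut}(\mathfrak{L}^s_\lambda)$. Then $\sigma(H_p)\in\mathbf{H}:=\mathrm{span}_{\mathbb{C}}\{H_q:q\in s+\mathbb{Z}\}$ for every $p\in s+\mathbb{Z}$.
   Context: For $s\in\{0,\tfrac12\}$ and $\lambda\in\mathbb{C}$, $\mathfrak{L}^s_\lambda$ is the complex Lie superalgebra with basis $\{L_m,I_m,G_p,H_p : m\in\mathbb{Z},\ p\in s+\mathbb{Z}\}$, even part spanned by the $L_m,I_m$, odd part spanned by the $G_p,H_p$, with brackets $[L_m,L_n]=(m-n)L_{m+n}$, $[L_m,I_n]=(m-n)I_{m+n}$, $[L_m,H_p]=(\tfrac m2-p)H_{m+p}$, $[L_m,G_p]=(\tfrac m2-p)G_{m+p}+\lambda(m+1)H_{m+p}$, $[I_m,G_p]=(m-2p)H_{m+p}$, $[G_p,G_q]=I_{p+q}$, plus super-antisymmetry; all other brackets of basis elements are zero. $\mathrm{Aut}(\mathfrak{L})$ is the group of bijective parity-preserving linear maps $\sigma$ with $\sigma([x,y])=[\sigma(x),\sigma(y)]$. *)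

theory Defs
  imports Complex_Main
begin

text \<open>The parameter s is encoded by a boolean
  half (s = 1/2 iff half).  L m and I m stand for L_m, I_m (m integer); G k and H k stand
  for G_p, H_p with p = k + s (k integer).\<close>

datatype basis = L int | I int | G int | H int

definition sval :: "bool \<Rightarrow> complex" where
  "sval half = (if half then 1/2 else 0)"

definition pidx :: "bool \<Rightarrow> int \<Rightarrow> complex" where
  "pidx half k = of_int k + sval half"

definition ev :: "basis \<Rightarrow> basis \<Rightarrow> complex" where
  "ev a = (\<lambda>b. if b = a then 1 else 0)"

definition Lvec :: "(basis \<Rightarrow> complex) set" where
  "Lvec = {x. finite {a. x a \<noteq> 0}}"

fun is_even :: "basis \<Rightarrow> bool" where
  "is_even (L _) = True" | "is_even (I _) = True" | "is_even (G _) = False" | "is_even (H _) = False"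

definition even_part :: "(basis \<Rightarrow> complex) set" where
  "even_part = {x \<in> Lvec. \<forall>a. x a \<noteq> 0 \<longrightarrow> is_even a}"

definition odd_part :: "(basis \<Rightarrow> complex) set" where
  "odd_part = {x \<in> Lvec. \<forall>a. x a \<noteq> 0 \<longrightarrow> \<not> is_even a}"

text \<open>Bracket of basis elements (all brackets, including those obtained by super-antisymmetry).\<close>
fun brb :: "bool \<Rightarrow> complex \<Rightarrow> basis \<Rightarrow> basis \<Rightarrow> basis \<Rightarrow> complex" where
  "brb half lam (L m) (L n) = (\<lambda>c. of_int (m - n) * ev (L (m + n)) c)"
| "brb half lam (L m) (I n) = (\<lambda>c. of_int (m - n) * ev (I (m + n)) c)"
| "brb half lam (I n) (L m) = (\<lambda>c. - of_int (m - n) * ev (I (m + n)) c)"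
| "brb half lam (L m) (H k) = (\<lambda>c. (of_int m / 2 - pidx half k) * ev (H (m + k)) c)"
| "brb half lam (H k) (L m) = (\<lambda>c. - (of_int m / 2 - pidx half k) * ev (H (m + k)) c)"
| "brb half lam (L m) (G k) = (\<lambda>c. (of_int m / 2 - pidx half k) * ev (G (m + k)) c
                                    + lam * of_int (m + 1) * ev (H (m + k)) c)"
| "brb half lam (G k) (L m) = (\<lambda>c. - ((of_int m / 2 - pidx half k) * ev (G (m + k)) c
                                    + lam * of_int (m + 1) * ev (H (m + k)) c))"
| "brb half lam (I m) (G k) = (\<lambda>c. (of_int m - 2 * pidx half k) * ev (H (m + k)) c)"
| "brb half lam (G k) (I m) = (\<lambda>c. - (of_int m - 2 * pidx half k) * ev (H (m + k)) c)"
| "brb half lam (G k) (G l) = ev (I (k + l + (if half then 1 else 0)))"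
| "brb half lam _ _ = (\<lambda>c. 0)"

definition br :: "bool \<Rightarrow> complex \<Rightarrow> (basis \<Rightarrow> complex) \<Rightarrow> (basis \<Rightarrow> complex) \<Rightarrow> basis \<Rightarrow> complex" where
  "br half lam x y = (\<lambda>c. \<Sum>a\<in>{a. x a \<noteq> 0}. \<Sum>b\<in>{b. y b \<noteq> 0}. x a * y b * brb half lam a b c)"

definition is_aut :: "bool \<Rightarrow> complex \<Rightarrow> ((basis \<Rightarrow> complex) \<Rightarrow> (basis \<Rightarrow> complex)) \<Rightarrow> bool" where
  "is_aut half lam \<sigma> \<longleftrightarrow>
     bij_betw \<sigma> Lvec Lvec
   \<and> (\<forall>x\<in>Lvec. \<forall>y\<in>Lvec. \<sigma> (\<lambda>b. x b + y b) = (\<lambda>b. \<sigma> x b + \<sigma> y b))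
   \<and> (\<forall>c. \<forall>x\<in>Lvec. \<sigma> (\<lambda>b. c * x b) = (\<lambda>b. c * \<sigma> x b))
   \<and> \<sigma> ` even_part \<subseteq> even_part
   \<and> \<sigma> ` odd_part \<subseteq> odd_part
   \<and> (\<forall>x\<in>Lvec. \<forall>y\<in>Lvec. \<sigma> (br half lam x y) = br half lam (\<sigma> x) (\<sigma> y))"

definition Hspan :: "(basis \<Rightarrow> complex) set" where
  "Hspan = {x. \<exists>F c. finite F \<and> x = (\<lambda>b. \<Sum>k\<in>F. c k * ev (H k) b)}"

end

theory Submission
  imports Defs
begin

fun idx :: "basis \<Rightarrow> int" where
  "idx (L m) = m" | "idx (I m) = m" | "idx (G m) = m" | "idx (H m) = m"

lemma brb_supp:
  assumes "brb h l a b c \<noteq> 0"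
  shows "c \<in> {L (idx a + idx b), I (idx a + idx b), I (idx a + idx b + 1), G (idx a + idx b), H (idx a + idx b)}"
  using assms by (cases a; cases b) (auto simp: ev_def ac_simps split: if_splits)

lemma br_Lvec:
  assumes "x \<in> Lvec" "y \<in> Lvec"
  shows "br h l x y \<in> Lvec"
proof -
  let ?Sx = "{a. x a \<noteq> 0}" and ?Sy = "{b. y b \<noteq> 0}"
  have fx: "finite ?Sx" and fy: "finite ?Sy" using assms by (auto simp: Lvec_def)
  have "{c. br h l x y c \<noteq> 0} \<subseteq> (\<Union>a\<in>?Sx. \<Union>b\<in>?Sy. {L (idx a + idx b), I (idx a + idx b), I (idx a + idx b + 1), G (idx a + idx b), H (idx a + idx b)})"
  proof
    fix c assume "c \<in> {c. br h l x y c \<noteq> 0}"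
    hence "(\<Sum>a\<in>?Sx. \<Sum>b\<in>?Sy. x a * y b * brb h l a b c) \<noteq> 0" by (simp add: br_def)
    then obtain a where a: "a \<in> ?Sx" "(\<Sum>b\<in>?Sy. x a * y b * brb h l a b c) \<noteq> 0"
      by (meson sum.neutral)
    then obtain b where b: "b \<in> ?Sy" "x a * y b * brb h l a b c \<noteq> 0"
      by (meson sum.neutral)
    hence "brb h l a b c \<noteq> 0" by auto
    from brb_supp[OF this] a b show "c \<in> (\<Union>a\<in>?Sx. \<Union>b\<in>?Sy. {L (idx a + idx b), I (idx a + idx b), I (idx a + idx b + 1), G (idx a + idx b), H (idx a + idx b)})"
      by blast
  qed
  moreover have "finite (\<Union>a\<in>?Sx. \<Union>b\<in>?Sy. {L (idx a + idx b), I (idx a + idx b), I (idx a + idx b + 1), G (idx a + idx b), H (idx a + idx b)})"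
    using fx fy by auto
  ultimately show ?thesis unfolding Lvec_def by (auto intro: finite_subset)
qed

lemma ev_Lvec: "ev a \<in> Lvec"
  by (simp add: Lvec_def ev_def)

lemma supp_ev: "{b. ev a b \<noteq> 0} = {a}"
  by (auto simp: ev_def)

lemma br_H_odd:
  assumes "z \<in> Lvec"
  shows "br h l (ev (H k)) z \<in> odd_part"
proof -
  have "\<forall>c. br h l (ev (H k)) z c \<noteq> 0 \<longrightarrow> \<not> is_even c"
  proof (intro allI impI)
    fix c assume "br h l (ev (H k)) z c \<noteq> 0"
    hence "(\<Sum>b\<in>{b. z b \<noteq> 0}. z b * brb h l (H k) b c) \<noteq> 0"
      unfolding br_def supp_ev by (simp add: ev_def)
    then obtain b where "z b * brb h l (H k) b c \<noteq> 0" by (meson sum.neutral)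
    hence "brb h l (H k) b c \<noteq> 0" by auto
    thus "\<not> is_even c" by (cases b; cases c) (auto simp: ev_def split: if_splits)
  qed
  thus ?thesis using br_Lvec[OF ev_Lvec assms] by (simp add: odd_part_def)
qed

lemma br_G0_I:
  assumes "x \<in> Lvec"
  shows "br h l x (ev (G 0)) (I j) = x (G (j - (if h then 1 else 0)))"
proof -
  let ?t = "G (j - (if h then 1 else 0))"
  have "br h l x (ev (G 0)) (I j) = (\<Sum>a\<in>{a. x a \<noteq> 0}. x a * brb h l a (G 0) (I j))"
    unfolding br_def supp_ev by (simp add: ev_def)
  also have "\<dots> = (\<Sum>a\<in>{a. x a \<noteq> 0}. if a = ?t then x a else 0)"
  proof (rule sum.cong[OF refl])
    fix a show "x a * brb h l a (G 0) (I j) = (if a = ?t then x a else 0)"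
      by (cases a) (auto simp: ev_def)
  qed
  also have "\<dots> = x ?t"
    using assms by (simp add: Lvec_def sum.delta)
  finally show ?thesis .
qed

theorem lemma3p3:
  fixes half :: bool and lam :: complex
    and \<sigma> :: "(basis \<Rightarrow> complex) \<Rightarrow> (basis \<Rightarrow> complex)"
  assumes "is_aut half lam \<sigma>"
  shows "\<forall>k::int. \<sigma> (ev (H k)) \<in> Hspan"
proof
  fix k :: int
  note A = assms[unfolded is_aut_def]
  have bij: "bij_betw \<sigma> Lvec Lvec" using A by blast
  have oddp: "\<And>v. v \<in> odd_part \<Longrightarrow> \<sigma> v \<in> odd_part" using A by blast
  have hom: "\<And>u v. u \<in> Lvec \<Longrightarrow> v \<in> Lvec \<Longrightarrow> \<sigma> (br half lam u v) = br half lam (\<sigma> u) (\<sigma> v)"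
    using A by blast
  have Hodd: "ev (H k) \<in> odd_part"
  proof -
    have "\<forall>a. ev (H k) a \<noteq> 0 \<longrightarrow> \<not> is_even a" by (simp add: ev_def)
    thus ?thesis using ev_Lvec[of "H k"] unfolding odd_part_def by blast
  qed
  define x where "x = \<sigma> (ev (H k))"
  have xodd: "x \<in> odd_part" using oddp[OF Hodd] unfolding x_def .
  hence xL: "x \<in> Lvec" by (simp add: odd_part_def)
  have "ev (G 0) \<in> \<sigma> ` Lvec" using bij ev_Lvec[of "G 0"] by (simp add: bij_betw_def)
  then obtain z where z: "z \<in> Lvec" "\<sigma> z = ev (G 0)" by auto
  have "\<sigma> (br half lam (ev (H k)) z) \<in> odd_part" by (rule oddp[OF br_H_odd[OF z(1)]])
  moreover have "\<sigma> (br half lam (ev (H k)) z) = br half lam x (ev (G 0))"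
    using hom[OF ev_Lvec z(1)] z(2) unfolding x_def by simp
  ultimately have bo: "br half lam x (ev (G 0)) \<in> odd_part" by simp
  have xG: "x (G p) = 0" for p
  proof -
    have "br half lam x (ev (G 0)) (I (p + (if half then 1 else 0))) = 0"
      using bo by (auto simp: odd_part_def)
    thus ?thesis using br_G0_I[OF xL] by simp
  qed
  have xE: "x b = 0" if "is_even b" for b using xodd that by (auto simp: odd_part_def)
  define F where "F = {j. x (H j) \<noteq> 0}"
  have "finite F"
  proof -
    have Fv: "F = H -` {a. x a \<noteq> 0}" by (auto simp: F_def)
    have f1: "finite {a. x a \<noteq> 0}" using xL by (simp add: Lvec_def)
    have i1: "inj H" by (simp add: inj_def)
    have "finite (H -` {a. x a \<noteq> 0})" by (rule finite_vimageI[OF f1 i1])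
    with Fv show ?thesis by (simp only:)
  qed
  moreover have "x = (\<lambda>b. \<Sum>j\<in>F. x (H j) * ev (H j) b)"
  proof
    fix b show "x b = (\<Sum>j\<in>F. x (H j) * ev (H j) b)"
    proof (cases b)
      case (H m)
      have "(\<Sum>j\<in>F. x (H j) * ev (H j) b) = (\<Sum>j\<in>F. if j = m then x (H j) else 0)"
        by (rule sum.cong) (auto simp: ev_def H)
      also have "\<dots> = (if m \<in> F then x (H m) else 0)" using \<open>finite F\<close> by (simp add: sum.delta')
      also have "\<dots> = x b" by (simp add: H F_def)
      finally show ?thesis by simp
    qed (auto simp: ev_def xG xE)
  qed
  ultimately have "\<exists>F c. finite F \<and> x = (\<lambda>b. \<Sum>k\<in>F. c k * ev (H k) b)"
    by (intro exI[of _ F] exI[of _ "\<lambda>j. x (H j)"]) simp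
  thus "\<sigma> (ev (H k)) \<in> Hspan" unfolding Hspan_def x_def by simp
qed

end
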